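(* Let $F$ be a differential field with derivation $\partial$ whose field of constants is an algebraically closed field $C$ of characteristic zero, and let $l\ge1$. Let $A=A_\Delta+H+N\in\mathfrak{sl}_{l+1}(F)$ with $A_\Delta=\sum_{i=1}^{l}E_{i,i+1}$, $H$ diagonal of trace zero over $F$, and $N$ strictly lower triangular over $F$. Then there exists $U\in\mathcal{U}^-(F)$ such that $UAU^{-1}+\partial(U)U^{-1}=A_\Delta+N'$ for some strictly lower triangular matrix $N'$ over $F$.
   Context: $E_{ij}$ denotes the matrix unit with $1$ at $(i,j)$. $\mathcal{U}^-(F)$ denotes the group of lower triangular unipotent $(l+1)\times(l+1)$ matrices over $F$ (the unipotent radical of the lower triangular Borel subgroup of $\mathrm{SL}_{l+1}$). In root-theoretic terms: $A\in A_\Delta+\mathbf{H}(F)\oplus\bigoplus_{\delta\in\Phi^-}\mathrm{Lie}(\mathrm{SL}_{l+1})_\delta(F)$ is transformed into $A_\Delta+\bigoplus_{\delta\in\Phi^-}\mathrm{Lie}(\mathrm{SL}_{l+1})_\delta(F)$, where $\mathbf{H}$ is the diagonal Cartan subalgebra and $\Phi^-$ the negative roots of type $A_l$ with root spaces spanned by $E_{t+1,s}$, $s\le t$. *)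

theory Defs
  imports "Jordan_Normal_Form.Matrix" "HOL-Computational_Algebra.Polynomial"
begin

definition is_derivation :: "('a::field \<Rightarrow> 'a) \<Rightarrow> bool" where
  "is_derivation D \<longleftrightarrow> (\<forall>a b. D (a + b) = D a + D b \<and> D (a * b) = a * D b + D a * b)"

definition dconsts :: "('a::field \<Rightarrow> 'a) \<Rightarrow> 'a set" where
  "dconsts D = {c. D c = 0}"

definition alg_closed_subset :: "'a::field set \<Rightarrow> bool" where
  "alg_closed_subset C \<longleftrightarrow>
     (\<forall>p::'a poly. (\<forall>i. coeff p i \<in> C) \<and> degree p > 0 \<longrightarrow> (\<exists>x\<in>C. poly p x = 0))"

text \<open>A_Delta = sum of E_{i,i+1} (0-based indices: entries (i,i+1)).\<close>
definition A_Delta :: "nat \<Rightarrow> 'a::{zero,one} mat" where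
  "A_Delta n = mat n n (\<lambda>(i,j). if j = i + 1 then 1 else 0)"

definition strictly_lower :: "nat \<Rightarrow> 'a::zero mat \<Rightarrow> bool" where
  "strictly_lower n N \<longleftrightarrow> N \<in> carrier_mat n n \<and> (\<forall>i<n. \<forall>j<n. i \<le> j \<longrightarrow> N $$ (i,j) = 0)"

definition lower_unipotent :: "nat \<Rightarrow> 'a::{zero,one} mat \<Rightarrow> bool" where
  "lower_unipotent n U \<longleftrightarrow> U \<in> carrier_mat n n \<and>
     (\<forall>i<n. U $$ (i,i) = 1) \<and> (\<forall>i<n. \<forall>j<n. i < j \<longrightarrow> U $$ (i,j) = 0)"

definition mat_trace :: "nat \<Rightarrow> 'a::comm_monoid_add mat \<Rightarrow> 'a" where
  "mat_trace n A = (\<Sum>i<n. A $$ (i,i))"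

end

theory Submission
  imports Defs "Jordan_Normal_Form.Determinant"
begin

lemma sum_row2:
  fixes f :: "nat \<Rightarrow> 'a::comm_ring_1"
  assumes "i < n"
  shows "(\<Sum>k\<in>{0..<n}. (if i = k then a else if i = Suc k then b else 0) * f k)
        = a * f i + (if 0 < i then b * f (i - 1) else 0)"
proof (cases i)
  case 0
  have "(\<Sum>k\<in>{0..<n}. (if i = k then a else if i = Suc k then b else 0) * f k)
      = (\<Sum>k\<in>{0..<n}. (if k = i then a * f k else 0))"
    by (rule sum.cong) (auto simp: 0)
  then show ?thesis using assms 0 by (simp add: sum.delta)
next
  case (Suc m)
  have "(\<Sum>k\<in>{0..<n}. (if i = k then a else if i = Suc k then b else 0) * f k)
      = (\<Sum>k\<in>{0..<n}. (if k = i then a * f k else 0) + (if k = m then b * f k else 0))"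
    by (rule sum.cong) (auto simp: Suc)
  also have "\<dots> = a * f i + b * f m"
    using assms Suc by (simp add: sum.distrib sum.delta)
  finally show ?thesis using Suc by simp
qed

lemma sum_row_delta:
  fixes f :: "nat \<Rightarrow> 'a::comm_ring_1"
  shows "(\<Sum>k\<in>{0..<n}. (if k = Suc i then 1 else 0) * f k)
        = (if Suc i < n then f (Suc i) else 0)"
proof -
  have "(\<Sum>k\<in>{0..<n}. (if k = Suc i then 1 else 0) * f k)
      = (\<Sum>k\<in>{0..<n}. (if k = Suc i then f k else 0))"
    by (rule sum.cong) auto
  then show ?thesis by (simp add: sum.delta)
qed

definition Um :: "nat \<Rightarrow> (nat \<Rightarrow> 'a::comm_ring_1) \<Rightarrow> 'a mat" where
  "Um n s = mat n n (\<lambda>(i,j). if i = j then 1 else if i = Suc j then s i else 0)"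

definition Vm :: "nat \<Rightarrow> (nat \<Rightarrow> 'a::comm_ring_1) \<Rightarrow> 'a mat" where
  "Vm n s = mat n n (\<lambda>(i,j). if j \<le> i then (-1)^(i-j) * prod s {Suc j..i} else 0)"

lemma UV: "Um n s * Vm n s = 1\<^sub>m n"
proof (rule eq_matI)
  fix i j assume i: "i < dim_row (1\<^sub>m n)" and j: "j < dim_col (1\<^sub>m n)"
  hence i: "i < n" and j: "j < n" by auto
  have "(Um n s * Vm n s) $$ (i,j) =
     (\<Sum>k\<in>{0..<n}. (if i = k then 1 else if i = Suc k then s i else 0) * Vm n s $$ (k, j))"
    using i j by (simp add: Um_def Vm_def scalar_prod_def)
  also have "\<dots> = Vm n s $$ (i,j) + (if 0 < i then s i * Vm n s $$ (i-1, j) else 0)"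
    by (subst sum_row2[OF i]) simp
  also have "\<dots> = 1\<^sub>m n $$ (i,j)"
  proof (cases "j < i")
    case True
    then obtain m where m: "i = Suc m" "j \<le> m" by (cases i) auto
    have "prod s {Suc j..Suc m} = prod s {Suc j..m} * s (Suc m)"
      using m by (simp add: prod.cl_ivl_Suc)
    moreover have "Suc m - j = Suc (m - j)" using m by simp
    ultimately show ?thesis using m i j by (simp add: Vm_def)
  next
    case False
    then show ?thesis using i j by (auto simp: Vm_def)
  qed
  finally show "(Um n s * Vm n s) $$ (i,j) = 1\<^sub>m n $$ (i,j)" .
qed (auto simp: Um_def Vm_def)

theorem lemma11:
  fixes D :: "'a::field_char_0 \<Rightarrow> 'a" and l :: nat
    and H N :: "'a mat"
  assumes "is_derivation D"
    and "alg_closed_subset (dconsts D)"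
    and "l \<ge> 1"
    and "H \<in> carrier_mat (l+1) (l+1)" and "diagonal_mat H" and "mat_trace (l+1) H = 0"
    and "strictly_lower (l+1) N"
  shows "\<exists>U Uinv N'. lower_unipotent (l+1) U \<and> Uinv \<in> carrier_mat (l+1) (l+1) \<and>
           U * Uinv = 1\<^sub>m (l+1) \<and> Uinv * U = 1\<^sub>m (l+1) \<and>
           strictly_lower (l+1) N' \<and>
           U * (A_Delta (l+1) + H + N) * Uinv + map_mat D U * Uinv = A_Delta (l+1) + N'"
proof -
  define n where "n = l + 1"
  define h where "h i = H $$ (i,i)" for i
  define s where "s i = sum h {0..<i}" for i
  define U where "U = Um n s"
  define V where "V = Vm n s"
  define A where "A = A_Delta n + H + N"
  define M where "M = U * A * V + map_mat D U * V"
  define B where "B = U * A + map_mat D U - A_Delta n * U"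
  have D0: "D 0 = 0" using assms(1) unfolding is_derivation_def
    by (metis add_cancel_right_right add_0)
  have D1: "D 1 = 0"
  proof -
    have "D (1*1) = 1 * D 1 + D 1 * 1" using assms(1) unfolding is_derivation_def by blast
    thus ?thesis by simp
  qed
  have Hc: "H \<in> carrier_mat n n" using assms(4) n_def by simp
  have Nc: "N \<in> carrier_mat n n" and Nz: "\<And>i j. i < n \<Longrightarrow> j < n \<Longrightarrow> i \<le> j \<Longrightarrow> N $$ (i,j) = 0"
    using assms(7) unfolding strictly_lower_def n_def by auto
  have Hz: "\<And>i j. i < n \<Longrightarrow> j < n \<Longrightarrow> i \<noteq> j \<Longrightarrow> H $$ (i,j) = 0"
    using assms(5) Hc unfolding diagonal_mat_def by auto
  have sn: "s n = 0" using assms(6) unfolding s_def h_def mat_trace_def n_def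
    by (simp add: atLeast0LessThan)
  have Uc: "U \<in> carrier_mat n n" and Vc: "V \<in> carrier_mat n n"
    and Ac: "A \<in> carrier_mat n n" and ADc: "(A_Delta n :: 'a mat) \<in> carrier_mat n n"
    using Hc Nc by (auto simp: U_def V_def Um_def Vm_def A_def A_Delta_def)
  have DUc: "map_mat D U \<in> carrier_mat n n" using Uc by simp
  have UV1: "U * V = 1\<^sub>m n" unfolding U_def V_def by (rule UV)
  have VU1: "V * U = 1\<^sub>m n" by (rule mat_mult_left_right_inverse[OF Uc Vc UV1])
  have Aent: "A $$ (i,j) = (if j = Suc i then 1 else 0) + (if i = j then h i else 0) + N $$ (i,j)"
    if "i < n" "j < n" for i j
    using that Hc Nc Hz by (simp add: A_def A_Delta_def h_def)
  have Bz: "B $$ (i,k) = 0" if ik: "i \<le> k" "k < n" for i k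
  proof -
    have i: "i < n" using ik by simp
    have "(U * A) $$ (i,k) = (\<Sum>j\<in>{0..<n}. (if i = j then 1 else if i = Suc j then s i else 0) * A $$ (j, k))"
      using i ik Ac by (simp add: U_def Um_def scalar_prod_def)
    also have "\<dots> = A $$ (i,k) + (if 0 < i then s i * A $$ (i-1, k) else 0)"
      by (subst sum_row2[OF i]) simp
    finally have UA: "(U * A) $$ (i,k) = A $$ (i,k) + (if 0 < i then s i * A $$ (i-1, k) else 0)" .
    have "(A_Delta n * U) $$ (i,k) = (\<Sum>j\<in>{0..<n}. (if j = Suc i then 1 else 0) * U $$ (j, k))"
      using i ik Uc by (simp add: A_Delta_def scalar_prod_def)
    also have "\<dots> = (if Suc i < n then U $$ (Suc i, k) else 0)" by (rule sum_row_delta)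
    finally have AU: "(A_Delta n * U) $$ (i,k) = (if Suc i < n then U $$ (Suc i, k) else 0)" .
    have DU: "map_mat D U $$ (i,k) = 0" using ik Uc D0 D1 by (simp add: U_def Um_def)
    have Bik: "B $$ (i,k) = (U * A) $$ (i,k) + map_mat D U $$ (i,k) - (A_Delta n * U) $$ (i,k)"
      unfolding B_def
      apply (subst index_minus_mat(1))
      using i ik carrier_matD[OF Uc] carrier_matD[OF Ac] carrier_matD[OF ADc] apply simp_all
      done
    show ?thesis
    proof (cases "k = i")
      case True
      have "s (Suc i) = s i + h i" by (simp add: s_def)
      moreover have "0 < i \<Longrightarrow> A $$ (i-1, i) = 1" using Aent[of "i-1" i] i Nz[of "i-1" i] by simp
      moreover have "s 0 = 0" by (simp add: s_def)
      moreover have "A $$ (i,i) = h i" using Aent[of i i] i Nz[of i i] by simp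
      moreover have "\<not> Suc i < n \<Longrightarrow> Suc i = n" using i by simp
      ultimately show ?thesis using Bik UA AU DU True sn
        by (cases "0 < i"; cases "Suc i < n") (auto simp: U_def Um_def algebra_simps)
    next
      case False
      hence ik2: "i < k" using ik by simp
      have "A $$ (i,k) = (if k = Suc i then 1 else 0)" using Aent[of i k] ik ik2 Nz[of i k] by simp
      moreover have "0 < i \<Longrightarrow> A $$ (i-1, k) = 0" using Aent[of "i-1" k] ik ik2 Nz[of "i-1" k] by simp
      moreover have "Suc i < n \<Longrightarrow> U $$ (Suc i, k) = (if k = Suc i then 1 else 0)"
        using ik ik2 by (simp add: U_def Um_def)
      ultimately show ?thesis using Bik UA AU DU ik ik2
        by (cases "0 < i"; cases "Suc i < n") auto
    qed
  qed
  have Bc: "B \<in> carrier_mat n n" using Uc Ac ADc unfolding B_def by (intro minus_carrier_mat add_carrier_mat mult_carrier_mat map_carrier_mat) auto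
  have UAD: "U * A + map_mat D U = B + A_Delta n * U"
    using Uc Ac ADc by (intro eq_matI) (auto simp: B_def)
  have "M = (U * A + map_mat D U) * V"
    unfolding M_def using Uc Ac Vc DUc by (simp add: add_mult_distrib_mat[of _ n n])
  also have "\<dots> = B * V + A_Delta n * U * V"
    unfolding UAD using Bc ADc Uc Vc by (simp add: add_mult_distrib_mat[of _ n n])
  also have "\<dots> = B * V + A_Delta n"
    using ADc Uc Vc UV1 by simp
  finally have Meq: "M = B * V + A_Delta n" .
  define N' where "N' = B * V"
  have N'c: "N' \<in> carrier_mat n n" using Bc Vc by (simp add: N'_def)
  have SL: "strictly_lower n N'"
    unfolding strictly_lower_def
  proof (intro conjI N'c allI impI)
    fix i j assume ij: "i < n" "j < n" "i \<le> j"
    have "N' $$ (i,j) = (\<Sum>k\<in>{0..<n}. B $$ (i,k) * V $$ (k,j))"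
      using ij Bc Vc by (simp add: N'_def scalar_prod_def)
    also have "\<dots> = 0"
    proof (rule sum.neutral, intro ballI)
      fix k assume k: "k \<in> {0..<n}"
      show "B $$ (i,k) * V $$ (k,j) = 0"
      proof (cases "i \<le> k")
        case True then show ?thesis using Bz k by simp
      next
        case False then show ?thesis using ij k by (simp add: V_def Vm_def)
      qed
    qed
    finally show "N' $$ (i,j) = 0" .
  qed
  have LU: "lower_unipotent n U"
    unfolding lower_unipotent_def using Uc by (auto simp: U_def Um_def)
  have "M = A_Delta n + N'" unfolding Meq N'_def
    using Bc Vc ADc by (simp add: comm_add_mat[of _ n n])
  thus ?thesis using LU Vc UV1 VU1 SL unfolding M_def A_def n_def by blast
qed

end
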